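(* Let $\mathcal{A}$ be a finite abelian group with $|\mathcal{A}|\ge 3$. Let $M_2(p_1,p_2,p_3)$ be the graph obtained from the complete graph on $\{v_1,v_2,v_3,v_4\}$ by deleting the edge $v_2v_4$ and attaching $p_i\ge 0$ pendant vertices to $v_i$ for $i=1,2,3$, and assume $M_2(p_1,p_2,p_3)$ has diameter $3$. Then $M_2(p_1,p_2,p_3)$ is $\mathcal{A}$-vertex magic if and only if $p_1=p_3=0$, $p_2\ge 2$, and $\mathcal{A}$ contains a square element.
   Context: An element $g\in\mathcal{A}$ is a square if $g\neq 0$ and $g=2h$ for some $h\in\mathcal{A}$. A map $\ell:V(G)\to\mathcal{A}\setminus\{0\}$ is an $\mathcal{A}$-vertex magic labeling if there is $\mu\in\mathcal{A}$ with $\sum_{u\in N(v)}\ell(u)=\mu$ for every vertex $v$; $G$ is $\mathcal{A}$-vertex magic if such a labeling exists. *)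

theory Defs
  imports Main
begin

definition nbhd :: "'v set \<Rightarrow> ('v \<Rightarrow> 'v \<Rightarrow> bool) \<Rightarrow> 'v \<Rightarrow> 'v set" where
  "nbhd V E v = {u \<in> V. E v u}"

fun within_dist :: "'v set \<Rightarrow> ('v \<Rightarrow> 'v \<Rightarrow> bool) \<Rightarrow> nat \<Rightarrow> 'v \<Rightarrow> 'v \<Rightarrow> bool" where
  "within_dist V E 0 u v = (u = v)"
| "within_dist V E (Suc n) u v =
     (within_dist V E n u v \<or> (\<exists>w\<in>V. E u w \<and> within_dist V E n w v))"

definition has_diameter :: "'v set \<Rightarrow> ('v \<Rightarrow> 'v \<Rightarrow> bool) \<Rightarrow> nat \<Rightarrow> bool" where
  "has_diameter V E d \<longleftrightarrow>
     (\<forall>u\<in>V. \<forall>v\<in>V. within_dist V E d u v) \<and>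
     (\<exists>u\<in>V. \<exists>v\<in>V. \<not> within_dist V E (d - 1) u v)"

definition is_square :: "'a::ab_group_add \<Rightarrow> bool" where
  "is_square g \<longleftrightarrow> g \<noteq> 0 \<and> (\<exists>h. g = h + h)"

definition vertex_magic_labeling ::
  "'v set \<Rightarrow> ('v \<Rightarrow> 'v \<Rightarrow> bool) \<Rightarrow> ('v \<Rightarrow> 'a::ab_group_add) \<Rightarrow> bool" where
  "vertex_magic_labeling V E l \<longleftrightarrow>
     (\<forall>v\<in>V. l v \<noteq> 0) \<and> (\<exists>\<mu>. \<forall>v\<in>V. (\<Sum>u\<in>nbhd V E v. l u) = \<mu>)"

definition vertex_magic :: "'a::ab_group_add itself \<Rightarrow> 'v set \<Rightarrow> ('v \<Rightarrow> 'v \<Rightarrow> bool) \<Rightarrow> bool" where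
  "vertex_magic TYPE('a) V E \<longleftrightarrow> (\<exists>l::'v \<Rightarrow> 'a. vertex_magic_labeling V E l)"

text \<open>Vertices: Core i is v_i (i = 1..4); Pend i j is the j-th pendant (j < p_i) attached to v_i.\<close>
datatype m2vert = Core nat | Pend nat nat

definition pcount :: "nat \<Rightarrow> nat \<Rightarrow> nat \<Rightarrow> nat \<Rightarrow> nat" where
  "pcount p1 p2 p3 i = (if i = 1 then p1 else if i = 2 then p2 else if i = 3 then p3 else 0)"

definition M2_verts :: "nat \<Rightarrow> nat \<Rightarrow> nat \<Rightarrow> m2vert set" where
  "M2_verts p1 p2 p3 = Core ` {1..4} \<union> {Pend i j | i j. i \<in> {1,2,3} \<and> j < pcount p1 p2 p3 i}"

fun M2_adj :: "m2vert \<Rightarrow> m2vert \<Rightarrow> bool" where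
  "M2_adj (Core i) (Core j) = (i \<noteq> j \<and> {i, j} \<noteq> {2, 4})"
| "M2_adj (Core i) (Pend k j) = (i = k)"
| "M2_adj (Pend k j) (Core i) = (i = k)"
| "M2_adj (Pend k j) (Pend k' j') = False"

end

theory Submission
  imports Defs
begin

lemma within2_hub:
  assumes "c \<in> V" "\<And>x. x \<in> V \<Longrightarrow> x \<noteq> c \<Longrightarrow> E c x \<and> E x c" "u \<in> V" "v \<in> V"
  shows "within_dist V E 2 u v"
proof -
  have "u = v \<or> (u = c \<and> E c v) \<or> (v = c \<and> E u c) \<or> (E u c \<and> E c v)"
    using assms by metis
  then show ?thesis using assms(1,3,4) by (auto simp: numeral_2_eq_2)
qed

lemma dbl_nat: "({a,b}::nat set) = {c,d} \<longleftrightarrow> (a = c \<and> b = d \<or> a = d \<and> b = c)"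
  by (metis doubleton_eq_iff)

lemma adjCC[simp]: "M2_adj (Core i) (Core j) = (i \<noteq> j \<and> \<not> ((i = 2 \<and> j = 4) \<or> (i = 4 \<and> j = 2)))"
  by (auto simp: dbl_nat)

declare M2_adj.simps(1)[simp del]

lemma memV_Core[simp]: "Core i \<in> M2_verts p1 p2 p3 \<longleftrightarrow> i \<in> {1..4}"
  by (auto simp: M2_verts_def)

lemma memV_Pend[simp]: "Pend i j \<in> M2_verts p1 p2 p3 \<longleftrightarrow> i \<in> {1,2,3} \<and> j < pcount p1 p2 p3 i"
  by (auto simp: M2_verts_def)

lemma nb_Pend: "i \<in> {1,2,3} \<Longrightarrow> nbhd (M2_verts p1 p2 p3) M2_adj (Pend i j) = {Core i}"
  by (auto simp: nbhd_def elim!: M2_adj.elims)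

lemma nb_C1: "nbhd (M2_verts p1 p2 p3) M2_adj (Core 1) = {Core 2, Core 3, Core 4} \<union> Pend 1 ` {..<p1}"
  apply (auto simp: nbhd_def pcount_def)
  apply (case_tac x; auto simp: pcount_def dbl_nat)
  done

lemma nb_C2: "nbhd (M2_verts p1 p2 p3) M2_adj (Core 2) = {Core 1, Core 3} \<union> Pend 2 ` {..<p2}"
  apply (auto simp: nbhd_def pcount_def)
  apply (case_tac x; auto simp: pcount_def dbl_nat)
  done

lemma nb_C3: "nbhd (M2_verts p1 p2 p3) M2_adj (Core 3) = {Core 1, Core 2, Core 4} \<union> Pend 3 ` {..<p3}"
  apply (auto simp: nbhd_def pcount_def)
  apply (case_tac x; auto simp: pcount_def dbl_nat)
  done

lemma nb_C4: "nbhd (M2_verts p1 p2 p3) M2_adj (Core 4) = {Core 1, Core 3}"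
  apply (auto simp: nbhd_def pcount_def)
  apply (case_tac x; auto simp: pcount_def dbl_nat)
  done

lemma sum_C1: "(\<Sum>u\<in>nbhd (M2_verts p1 p2 p3) M2_adj (Core 1). l u) =
   l (Core 2) + l (Core 3) + l (Core 4) + (\<Sum>j<p1. l (Pend 1 j))"
  unfolding nb_C1 by (subst sum.union_disjoint) (auto simp: sum.reindex inj_on_def add.assoc)

lemma sum_C2: "(\<Sum>u\<in>nbhd (M2_verts p1 p2 p3) M2_adj (Core 2). l u) =
   l (Core 1) + l (Core 3) + (\<Sum>j<p2. l (Pend 2 j))"
  unfolding nb_C2 by (subst sum.union_disjoint) (auto simp: sum.reindex inj_on_def add.assoc)

lemma sum_C3: "(\<Sum>u\<in>nbhd (M2_verts p1 p2 p3) M2_adj (Core 3). l u) =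
   l (Core 1) + l (Core 2) + l (Core 4) + (\<Sum>j<p3. l (Pend 3 j))"
  unfolding nb_C3 by (subst sum.union_disjoint) (auto simp: sum.reindex inj_on_def add.assoc)

lemma sum_C4: "(\<Sum>u\<in>nbhd (M2_verts p1 p2 p3) M2_adj (Core 4). l u) = l (Core 1) + l (Core 3)"
  unfolding nb_C4 by simp

lemma zero_sum_seq:
  assumes "card (UNIV :: ('a::{ab_group_add, finite}) set) \<ge> 3" "n \<ge> 2"
  shows "\<exists>f::nat \<Rightarrow> 'a. (\<forall>j. f j \<noteq> 0) \<and> (\<Sum>j<n. f j) = 0"
  using assms(2)
proof (induction n rule: less_induct)
  case (less n)
  obtain x :: 'a where x: "x \<noteq> 0"
  proof -
    have "UNIV \<noteq> {0::'a}"
    proof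
      assume "UNIV = {0::'a}"
      then have "card (UNIV::'a set) = card {0::'a}" by (rule arg_cong)
      with assms(1) show False by simp
    qed
    then show ?thesis using that by blast
  qed
  show ?case
  proof (cases "n = 2")
    case True
    show ?thesis
      by (rule exI[of _ "\<lambda>j. if j = 0 then x else - x"]) (use x True in \<open>auto simp: numeral_2_eq_2\<close>)
  next
    case n2: False
    show ?thesis
    proof (cases "n = 3")
      case True
      obtain y :: 'a where y: "y \<noteq> 0" "y \<noteq> - x"
      proof -
        have "\<not> UNIV \<subseteq> {0, - x}"
        proof
          assume "UNIV \<subseteq> {0::'a, - x}"
          then have "card (UNIV::'a set) \<le> card {0::'a, -x}" by (simp add: card_mono)
          also have "\<dots> \<le> 2" by (simp add: card_insert_le_m1)
          finally show False using assms(1) by simp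
        qed
        then show ?thesis using that by blast
      qed
      have "x + y \<noteq> 0" using y by (metis add.commute add_eq_0_iff)
      then show ?thesis
        by (intro exI[of _ "\<lambda>j. if j = 0 then x else if j = 1 then y else - (x + y)"])
           (use x y True in \<open>auto simp: numeral_3_eq_3\<close>)
    next
      case False
      with n2 less.prems have "n - 2 \<ge> 2" "n - 2 < n" by auto
      then obtain f :: "nat \<Rightarrow> 'a" where f: "\<forall>j. f j \<noteq> 0" "(\<Sum>j<n-2. f j) = 0"
        using less.IH by blast
      define g where "g = (\<lambda>j. if j < n - 2 then f j else if j = n - 2 then x else - x)"
      have nn: "n = Suc (Suc (n - 2))" using less.prems by simp
      have "(\<Sum>j<n. g j) = (\<Sum>j<n-2. g j) + g (n-2) + g (Suc (n-2))"
        by (subst nn) simp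
      also have "(\<Sum>j<n-2. g j) = (\<Sum>j<n-2. f j)" by (rule sum.cong) (auto simp: g_def)
      finally have "(\<Sum>j<n. g j) = 0" using f by (simp add: g_def)
      moreover have "\<forall>j. g j \<noteq> 0" using f x by (simp add: g_def)
      ultimately show ?thesis by blast
    qed
  qed
qed

theorem proposition4p2:
  fixes p1 p2 p3 :: nat
  assumes "card (UNIV :: ('a::{ab_group_add, finite}) set) \<ge> 3"
    and "has_diameter (M2_verts p1 p2 p3) M2_adj 3"
  shows "vertex_magic TYPE('a) (M2_verts p1 p2 p3) M2_adj \<longleftrightarrow>
         (p1 = 0 \<and> p3 = 0 \<and> p2 \<ge> 2 \<and> (\<exists>g::'a. is_square g))"
proof
  let ?V = "M2_verts p1 p2 p3"
  have diam: "p2 > 0 \<or> (p1 > 0 \<and> p3 > 0)"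
  proof (rule ccontr)
    assume a: "\<not> ?thesis"
    have "\<exists>c\<in>?V. \<forall>x\<in>?V. x \<noteq> c \<longrightarrow> M2_adj c x \<and> M2_adj x c"
    proof (cases "p3 = 0")
      case True
      with a have "p2 = 0" by auto
      with True show ?thesis
        apply (intro bexI[of _ "Core 1"])
        apply clarify
        apply (case_tac x; auto simp: pcount_def dbl_nat)
        apply (auto simp: M2_verts_def)
        done
    next
      case False
      with a have "p2 = 0" "p1 = 0" by auto
      then show ?thesis
        apply (intro bexI[of _ "Core 3"])
        apply clarify
        apply (case_tac x; auto simp: pcount_def dbl_nat)
        apply (auto simp: M2_verts_def)
        done
    qed
    then obtain c where "c \<in> ?V" "\<And>x. x \<in> ?V \<Longrightarrow> x \<noteq> c \<Longrightarrow> M2_adj c x \<and> M2_adj x c" by blast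
    then have "\<forall>u\<in>?V. \<forall>v\<in>?V. within_dist ?V M2_adj 2 u v" using within2_hub by metis
    with assms(2) show False by (simp add: has_diameter_def)
  qed
  {
    assume "vertex_magic TYPE('a) ?V M2_adj"
    then obtain l :: "m2vert \<Rightarrow> 'a" and \<mu> where nz: "\<And>v. v \<in> ?V \<Longrightarrow> l v \<noteq> 0"
      and mg: "\<And>v. v \<in> ?V \<Longrightarrow> (\<Sum>u\<in>nbhd ?V M2_adj v. l u) = \<mu>"
      unfolding vertex_magic_def vertex_magic_labeling_def by blast
    have e1: "l (Core 2) + l (Core 3) + l (Core 4) + (\<Sum>j<p1. l (Pend 1 j)) = \<mu>"
      using mg[of "Core 1"] unfolding sum_C1 by simp
    have e2: "l (Core 1) + l (Core 3) + (\<Sum>j<p2. l (Pend 2 j)) = \<mu>"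
      using mg[of "Core 2"] unfolding sum_C2 by simp
    have e3: "l (Core 1) + l (Core 2) + l (Core 4) + (\<Sum>j<p3. l (Pend 3 j)) = \<mu>"
      using mg[of "Core 3"] unfolding sum_C3 by simp
    have e4: "l (Core 1) + l (Core 3) = \<mu>"
      using mg[of "Core 4"] unfolding sum_C4 by simp
    have pe: "l (Core i) = \<mu>" if "i \<in> {1,2,3}" "0 < pcount p1 p2 p3 i" for i
      using mg[of "Pend i 0"] that by (simp add: nb_Pend)
    have nzc: "l (Core i) \<noteq> 0" if "i \<in> {1..4}" for i using nz[of "Core i"] that by simp
    have S2: "(\<Sum>j<p2. l (Pend 2 j)) = 0" using e2 e4 by simp
    have p2: "p2 > 0"
    proof (rule ccontr)
      assume "\<not> p2 > 0"
      with diam have "p1 > 0" "p3 > 0" by auto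
      then have "l (Core 1) = \<mu>" "l (Core 3) = \<mu>" using pe[of 1] pe[of 3] by (auto simp: pcount_def)
      with e4 have "l (Core 1) = 0" by simp
      with nzc[of 1] show False by simp
    qed
    have a2: "l (Core 2) = \<mu>" using pe[of 2] p2 by (simp add: pcount_def)
    have "p2 \<noteq> 1"
    proof
      assume "p2 = 1"
      then have "l (Pend 2 0) = 0" using S2 by simp
      with nz[of "Pend 2 0"] \<open>p2 = 1\<close> show False by (simp add: pcount_def)
    qed
    with p2 have p2': "p2 \<ge> 2" by simp
    have p1: "p1 = 0"
    proof (rule ccontr)
      assume "p1 \<noteq> 0"
      then have "l (Core 1) = \<mu>" using pe[of 1] by (simp add: pcount_def)
      with e4 have "l (Core 3) = 0" by simp
      with nzc[of 3] show False by simp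
    qed
    have p3: "p3 = 0"
    proof (rule ccontr)
      assume "p3 \<noteq> 0"
      then have "l (Core 3) = \<mu>" using pe[of 3] by (simp add: pcount_def)
      with e4 have "l (Core 1) = 0" by simp
      with nzc[of 1] show False by simp
    qed
    from e1 e3 p1 p3 have "l (Core 2) + l (Core 3) + l (Core 4) = l (Core 1) + l (Core 2) + l (Core 4)"
      by simp
    then have "l (Core 3) = l (Core 1)"
      by (simp add: algebra_simps)
    with e4 have "\<mu> = l (Core 1) + l (Core 1)" by simp
    moreover have "\<mu> \<noteq> 0" using a2 nzc[of 2] by simp
    ultimately have "is_square \<mu>" by (auto simp: is_square_def)
    then show "p1 = 0 \<and> p3 = 0 \<and> p2 \<ge> 2 \<and> (\<exists>g::'a. is_square g)" using p1 p3 p2' by blast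
  }
  {
    assume "p1 = 0 \<and> p3 = 0 \<and> p2 \<ge> 2 \<and> (\<exists>g::'a. is_square g)"
    then obtain g h :: 'a where p: "p1 = 0" "p3 = 0" "p2 \<ge> 2" and g: "g \<noteq> 0" "g = h + h"
      by (auto simp: is_square_def)
    have h: "h \<noteq> 0" using g by auto
    obtain f :: "nat \<Rightarrow> 'a" where f: "\<And>j. f j \<noteq> 0" "(\<Sum>j<p2. f j) = 0"
      using zero_sum_seq[OF assms(1) p(3)] by blast
    define l where "l = (\<lambda>v. case v of Core i \<Rightarrow> (if i = 2 then g else if i = 4 then - h else h)
                               | Pend i j \<Rightarrow> (if i = 2 then f j else h))"
    have "vertex_magic_labeling ?V M2_adj l"
      unfolding vertex_magic_labeling_def
    proof (intro conjI exI[of _ g] ballI)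
      fix v assume "v \<in> ?V"
      then show "l v \<noteq> 0" using g h f by (cases v) (auto simp: l_def)
    next
      fix v assume v: "v \<in> ?V"
      show "(\<Sum>u\<in>nbhd ?V M2_adj v. l u) = g"
      proof (cases v)
        case (Core i)
        with v have "i = 1 \<or> i = 2 \<or> i = 3 \<or> i = 4" by auto
        then show ?thesis
        proof (elim disjE)
          assume i: "i = 1" show ?thesis unfolding Core i sum_C1 using p f g by (simp add: l_def)
        next
          assume i: "i = 2" show ?thesis unfolding Core i sum_C2 using p f g by (simp add: l_def)
        next
          assume i: "i = 3" show ?thesis unfolding Core i sum_C3 using p f g by (simp add: l_def)
        next
          assume i: "i = 4" show ?thesis unfolding Core i sum_C4 using p f g by (simp add: l_def)
        qed
      next
        case (Pend i j)
        with v p have "i = 2" by (auto simp: pcount_def)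
        then show ?thesis using Pend by (simp add: nb_Pend l_def)
      qed
    qed
    then show "vertex_magic TYPE('a) ?V M2_adj" unfolding vertex_magic_def by blast
  }
qed

end
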